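(* For every integer $p \ge 1$ there exist an integer $k$ and a $k$-colourable $(K_4, \text{diamond}, \text{paw}, \text{co-claw}, \text{co-diamond})$-free graph $G$ that is not $(k+p)$-mixing.
   Context: All graphs are finite and simple. A $k$-colouring of $G$ is a map $\alpha: V(G)\to\{1,\dots,k\}$ with $\alpha(u)\neq\alpha(v)$ for every edge $uv$; $G$ is $k$-colourable if one exists. The reconfiguration graph $\mathcal{R}_k(G)$ has the $k$-colourings of $G$ as vertices, two being adjacent if they differ on exactly one vertex; $G$ is $k$-mixing if $\mathcal{R}_k(G)$ is connected. A graph is $\mathcal{H}$-free if it contains no induced subgraph isomorphic to any member of $\mathcal{H}$. The diamond is $K_4$ minus one edge; the paw is a triangle with a pendant vertex attached to one triangle vertex; the co-claw is $K_3+K_1$ (a triangle plus an isolated vertex); the co-diamond is $K_2+2K_1$ (one edge plus two isolated vertices). *)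

theory Defs
  imports Main
begin

definition simple_graph :: "'a set \<Rightarrow> ('a \<Rightarrow> 'a \<Rightarrow> bool) \<Rightarrow> bool" where
  "simple_graph V E \<longleftrightarrow> finite V \<and> (\<forall>u v. E u v \<longrightarrow> u \<in> V \<and> v \<in> V)
     \<and> (\<forall>u v. E u v \<longrightarrow> E v u) \<and> (\<forall>v. \<not> E v v)"

definition contains_induced ::
  "'a set \<Rightarrow> ('a \<Rightarrow> 'a \<Rightarrow> bool) \<Rightarrow> 'b set \<Rightarrow> ('b \<Rightarrow> 'b \<Rightarrow> bool) \<Rightarrow> bool" where
  "contains_induced V E W F \<longleftrightarrow>
     (\<exists>f. inj_on f W \<and> f ` W \<subseteq> V \<and> (\<forall>u\<in>W. \<forall>v\<in>W. F u v \<longleftrightarrow> E (f u) (f v)))"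

definition four_vertices :: "nat set" where "four_vertices = {0,1,2,3}"

definition edges_rel :: "nat set set \<Rightarrow> nat \<Rightarrow> nat \<Rightarrow> bool" where
  "edges_rel S u v \<longleftrightarrow> u \<noteq> v \<and> {u, v} \<in> S"

definition K4_edges :: "nat set set" where
  "K4_edges = {{0,1},{0,2},{0,3},{1,2},{1,3},{2,3}}"
definition diamond_edges :: "nat set set" where
  "diamond_edges = {{0,1},{0,2},{0,3},{1,2},{1,3}}"
definition paw_edges :: "nat set set" where
  "paw_edges = {{0,1},{0,2},{1,2},{2,3}}"
definition coclaw_edges :: "nat set set" where
  "coclaw_edges = {{0,1},{0,2},{1,2}}"
definition codiamond_edges :: "nat set set" where
  "codiamond_edges = {{0,1}}"

definition H_free_5 :: "'a set \<Rightarrow> ('a \<Rightarrow> 'a \<Rightarrow> bool) \<Rightarrow> bool" where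
  "H_free_5 V E \<longleftrightarrow>
     (\<forall>S \<in> {K4_edges, diamond_edges, paw_edges, coclaw_edges, codiamond_edges}.
        \<not> contains_induced V E four_vertices (edges_rel S))"

text \<open>k-colourings: maps V to {1..k}, proper; normalised to 0 outside V so that
  colourings are determined by their values on V.\<close>
definition is_colouring :: "'a set \<Rightarrow> ('a \<Rightarrow> 'a \<Rightarrow> bool) \<Rightarrow> nat \<Rightarrow> ('a \<Rightarrow> nat) \<Rightarrow> bool" where
  "is_colouring V E k \<alpha> \<longleftrightarrow> (\<forall>v\<in>V. \<alpha> v \<in> {1..k}) \<and> (\<forall>v. v \<notin> V \<longrightarrow> \<alpha> v = 0)
     \<and> (\<forall>u v. E u v \<longrightarrow> \<alpha> u \<noteq> \<alpha> v)"

definition colourable :: "'a set \<Rightarrow> ('a \<Rightarrow> 'a \<Rightarrow> bool) \<Rightarrow> nat \<Rightarrow> bool" where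
  "colourable V E k \<longleftrightarrow> (\<exists>\<alpha>. is_colouring V E k \<alpha>)"

definition recol_edge :: "'a set \<Rightarrow> ('a \<Rightarrow> 'a \<Rightarrow> bool) \<Rightarrow> nat \<Rightarrow> (('a \<Rightarrow> nat) \<times> ('a \<Rightarrow> nat)) set" where
  "recol_edge V E k = {(\<alpha>, \<beta>). is_colouring V E k \<alpha> \<and> is_colouring V E k \<beta>
      \<and> card {v \<in> V. \<alpha> v \<noteq> \<beta> v} = 1}"

definition mixing :: "'a set \<Rightarrow> ('a \<Rightarrow> 'a \<Rightarrow> bool) \<Rightarrow> nat \<Rightarrow> bool" where
  "mixing V E k \<longleftrightarrow> (\<forall>\<alpha> \<beta>. is_colouring V E k \<alpha> \<longrightarrow> is_colouring V E k \<beta>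
      \<longrightarrow> (\<alpha>, \<beta>) \<in> (recol_edge V E k)\<^sup>*)"

end

theory Submission
  imports Defs
begin

definition GE :: "nat \<Rightarrow> nat \<Rightarrow> nat \<Rightarrow> bool" where
  "GE n u v \<longleftrightarrow> u < 2*n \<and> v < 2*n \<and> u mod 2 \<noteq> v mod 2 \<and> u div 2 \<noteq> v div 2"

lemma eq_md: "(u::nat) = v \<longleftrightarrow> u mod 2 = v mod 2 \<and> u div 2 = v div 2"
  by (metis div_mult_mod_eq)

lemma md2: "(u::nat) mod 2 = 0 \<or> u mod 2 = 1" by auto

lemma sg: "simple_graph {..<2*n} (GE n)"
  unfolding simple_graph_def GE_def by auto

lemma no_tri: "GE n a b \<Longrightarrow> GE n a c \<Longrightarrow> GE n b c \<Longrightarrow> False"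
  unfolding GE_def using md2[of a] md2[of b] md2[of c] by auto

lemma abs4:
  fixes pa pb pc pd ha hb hc hd :: nat
  assumes "pa \<noteq> pb" "ha \<noteq> hb" "pa = pc \<or> pb = pc" "pa = pd \<or> pb = pd"
   "pa = pc \<or> ha = hc" "pa = pd \<or> ha = hd" "pb = pc \<or> hb = hc" "pb = pd \<or> hb = hd"
   "pc = pd \<or> hc = hd" "pc \<noteq> pd \<or> hc \<noteq> hd"
  shows False
  using assms by (cases "pa = pc"; cases "pa = pd"; simp)

lemma no_codiamond:
  assumes "GE n a b" "\<not> GE n a c" "\<not> GE n a d" "\<not> GE n b c" "\<not> GE n b d" "\<not> GE n c d"
    "c \<noteq> d" "c < 2*n" "d < 2*n"
  shows False
proof -
  have ab: "a < 2*n" "b < 2*n" "a mod 2 \<noteq> b mod 2" "a div 2 \<noteq> b div 2" using assms(1) by (auto simp: GE_def)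
  have cd: "c mod 2 \<noteq> d mod 2 \<or> c div 2 \<noteq> d div 2" using assms(7) eq_md by blast
  have nc: "\<not> GE n x y \<longleftrightarrow> (x mod 2 = y mod 2 \<or> x div 2 = y div 2)"
    if "x < 2*n" "y < 2*n" for x y using that unfolding GE_def by auto
  have h: "a mod 2 = c mod 2 \<or> a div 2 = c div 2" "a mod 2 = d mod 2 \<or> a div 2 = d div 2"
    "b mod 2 = c mod 2 \<or> b div 2 = c div 2" "b mod 2 = d mod 2 \<or> b div 2 = d div 2"
    "c mod 2 = d mod 2 \<or> c div 2 = d div 2"
    using nc assms(2-6,8,9) ab(1,2) by blast+
  have p: "a mod 2 = c mod 2 \<or> b mod 2 = c mod 2" "a mod 2 = d mod 2 \<or> b mod 2 = d mod 2"
    using md2[of a] md2[of b] md2[of c] md2[of d] ab(3) by auto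
  show False using abs4[OF ab(3,4) p h cd] .
qed

lemma free: "H_free_5 {..<2*n} (GE n)"
  unfolding H_free_5_def
proof (intro ballI notI)
  fix S assume S: "S \<in> {K4_edges, diamond_edges, paw_edges, coclaw_edges, codiamond_edges}"
    and ci: "contains_induced {..<2*n} (GE n) four_vertices (edges_rel S)"
  then obtain f where inj: "inj_on f four_vertices" and sub: "f ` four_vertices \<subseteq> {..<2*n}"
    and F: "\<forall>u\<in>four_vertices. \<forall>v\<in>four_vertices. edges_rel S u v \<longleftrightarrow> GE n (f u) (f v)"
    unfolding contains_induced_def by blast
  have Fi: "edges_rel S u v \<longleftrightarrow> GE n (f u) (f v)" if "u \<in> {0,1,2,3}" "v \<in> {0,1,2,3}" for u v
    using F that unfolding four_vertices_def by blast
  show False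
  proof (cases "S = codiamond_edges")
    case True
    have "f 2 \<noteq> f 3"
    proof
      assume "f 2 = f 3"
      from inj_onD[OF inj this] show False by (simp add: four_vertices_def)
    qed
    moreover have "f 2 < 2*n" "f 3 < 2*n" using sub unfolding four_vertices_def image_subset_iff by simp_all
    moreover have "edges_rel S 0 1" "\<not> edges_rel S 0 2" "\<not> edges_rel S 0 3"
      "\<not> edges_rel S 1 2" "\<not> edges_rel S 1 3" "\<not> edges_rel S 2 3"
      using True by (simp_all add: edges_rel_def codiamond_edges_def doubleton_eq_iff)
    then have "GE n (f 0) (f 1)" "\<not> GE n (f 0) (f 2)" "\<not> GE n (f 0) (f 3)"
      "\<not> GE n (f 1) (f 2)" "\<not> GE n (f 1) (f 3)" "\<not> GE n (f 2) (f 3)"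
      using Fi[of 0 1] Fi[of 0 2] Fi[of 0 3] Fi[of 1 2] Fi[of 1 3] Fi[of 2 3] by simp_all
    ultimately show False using no_codiamond[of n "f 0" "f 1" "f 2" "f 3"] by simp
  next
    case False
    then have "edges_rel S 0 1 \<and> edges_rel S 0 2 \<and> edges_rel S 1 2"
      using S unfolding edges_rel_def K4_edges_def diamond_edges_def paw_edges_def coclaw_edges_def
      by (elim insertE; simp)
    then have "GE n (f 0) (f 1)" "GE n (f 0) (f 2)" "GE n (f 1) (f 2)"
      using Fi[of 0 1] Fi[of 0 2] Fi[of 1 2] by simp_all
    then show False using no_tri[of n "f 0" "f 1" "f 2"] by simp
  qed
qed

definition frz :: "nat \<Rightarrow> nat \<Rightarrow> nat" where
  "frz n v = (if v < 2*n then v div 2 + 1 else 0)"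
definition bip :: "nat \<Rightarrow> nat \<Rightarrow> nat" where
  "bip n v = (if v < 2*n then v mod 2 + 1 else 0)"

lemma frz_col: "is_colouring {..<2*n} (GE n) n (frz n)"
  unfolding is_colouring_def frz_def GE_def by auto

lemma bip_col: "n \<ge> 2 \<Longrightarrow> is_colouring {..<2*n} (GE n) k (bip n)" if "k \<ge> 2"
  using that unfolding is_colouring_def bip_def GE_def by auto

lemma frozen:
  assumes "(frz n, g) \<in> recol_edge {..<2*n} (GE n) n"
  shows False
proof -
  let ?D = "{v \<in> {..<2*n}. frz n v \<noteq> g v}"
  have gc: "is_colouring {..<2*n} (GE n) n g" and c1: "card ?D = 1"
    using assms unfolding recol_edge_def by auto
  then obtain v where D: "?D = {v}" using card_1_singletonE by blast
  then have "v \<in> ?D" by blast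
  then have v: "v < 2*n" "g v \<noteq> frz n v" by simp_all
  then have gv: "g v \<in> {1..n}" using gc unfolding is_colouring_def by auto
  define j where "j = g v - 1"
  have j: "j < n" "j \<noteq> v div 2" using gv v unfolding j_def frz_def by auto
  define w where "w = 2*j + (1 - v mod 2)"
  have w: "w < 2*n" "w div 2 = j" "w mod 2 \<noteq> v mod 2" using j md2[of v] unfolding w_def by auto
  have E: "GE n v w" using w v j unfolding GE_def by auto
  have "w \<noteq> v" using w(3) by auto
  then have "w \<notin> ?D" by (simp only: D) simp
  then have "g w = frz n w" using w by auto
  also have "\<dots> = g v" using w gv unfolding frz_def j_def by auto
  finally have "g w = g v" .
  moreover have "g v \<noteq> g w" using E gc unfolding is_colouring_def by blast
  ultimately show False by simp
qed

lemma not_mix: "n \<ge> 2 \<Longrightarrow> \<not> mixing {..<2*n} (GE n) n"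
proof
  assume n: "n \<ge> 2" and m: "mixing {..<2*n} (GE n) n"
  have "(frz n, bip n) \<in> (recol_edge {..<2*n} (GE n) n)\<^sup>*"
    using m frz_col bip_col[OF n n] unfolding mixing_def by blast
  moreover have "frz n \<noteq> bip n"
  proof
    assume "frz n = bip n"
    then have "frz n 2 = bip n 2" by simp
    then show False using n unfolding frz_def bip_def by auto
  qed
  ultimately show False using frozen by (metis converse_rtranclE)
qed

theorem theorem5:
  shows "\<forall>p::nat. p \<ge> 1 \<longrightarrow> (\<exists>k::nat. \<exists>(V::nat set) E.
     simple_graph V E \<and> colourable V E k \<and> H_free_5 V E \<and> \<not> mixing V E (k + p))"
proof (intro allI impI)
  fix p :: nat assume p: "p \<ge> 1"
  let ?n = "2 + p"
  have "colourable {..<2*?n} (GE ?n) 2"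
    using bip_col[of 2 ?n] unfolding colourable_def by auto
  then show "\<exists>k::nat. \<exists>(V::nat set) E.
     simple_graph V E \<and> colourable V E k \<and> H_free_5 V E \<and> \<not> mixing V E (k + p)"
  proof (intro exI conjI)
    show "simple_graph {..<2*?n} (GE ?n)" by (rule sg)
    show "H_free_5 {..<2*?n} (GE ?n)" by (rule free)
    show "\<not> mixing {..<2*?n} (GE ?n) (2 + p)" using not_mix[of ?n] by simp
  qed
qed

end
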